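(* Let $Q$ be a rational function with distinct poles $z_1,\dotsc,z_d$, $d\ge2$, of orders $r_1,\dotsc,r_d$; put $P=\prod_i(z-z_i)^{r_i}$, $P_0=\prod_i(z-z_i)$, write $Q^{(n)}=\frac{\alpha_nR_n}{PP_0^n}$ with $\alpha_n\in\mathbb{C}$, $R_n$ monic, and $m_n=\deg R_n$. Assume ( * ) the closed unit disk $\{|z|\le1\}$ is disjoint from the Voronoi 1-skeleton $\mathrm{Vor}_S$ of $S=\{z_1,\dotsc,z_d\}$, and ( ** ) $|z_i|\ge1$ for all $i$. For $R>0$ let $D_R=\{|z|\le R\}$, and for $K\subset\mathbb{C}$ let $|z_{K,n}|=\prod_{z\in K,\,R_n(z)=0}|z|$ (zeroes with multiplicity; equal to $1$ if $R_n$ has no zeroes in $K$). Then for $K=D_R$ and for $K=\mathbb{C}\setminus D_R$ the sequence $|z_{K,n}|^{1/n}$ is bounded, and there are constants $C$ and $N$ such that $0\le\frac{1}{m_n}\log|z_{K,n}|\le C$ for all $n\ge N$.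
   Context: With $\Phi(z)=\min_k|z-z_k|$, the Voronoi edges are $V_{ij}=\{z:\Phi(z)=|z-z_i|=|z-z_j|\}$ ($i\ne j$) and $\mathrm{Vor}_S=\bigcup_{i<j}V_{ij}$. *)

theory Defs
  imports "HOL-Analysis.Analysis" "HOL-Computational_Algebra.Polynomial"
begin

definition polP :: "nat \<Rightarrow> (nat \<Rightarrow> complex) \<Rightarrow> (nat \<Rightarrow> nat) \<Rightarrow> complex poly" where
  "polP d z r = (\<Prod>i<d. [:- z i, 1:] ^ r i)"

definition polP0 :: "nat \<Rightarrow> (nat \<Rightarrow> complex) \<Rightarrow> complex poly" where
  "polP0 d z = (\<Prod>i<d. [:- z i, 1:])"

text \<open>The rational function Q = A / P (A not vanishing at any z i).\<close>
definition ratQ :: "complex poly \<Rightarrow> nat \<Rightarrow> (nat \<Rightarrow> complex) \<Rightarrow> (nat \<Rightarrow> nat) \<Rightarrow> complex \<Rightarrow> complex" where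
  "ratQ A d z r = (\<lambda>w. poly A w / poly (polP d z r) w)"

text \<open>The numerator alpha_n R_n:  Q^(n) = alpha_n R_n / (P P0^n) away from the poles.\<close>
definition numQ :: "complex poly \<Rightarrow> nat \<Rightarrow> (nat \<Rightarrow> complex) \<Rightarrow> (nat \<Rightarrow> nat) \<Rightarrow> nat \<Rightarrow> complex poly" where
  "numQ A d z r n = (THE p. \<forall>w. poly (polP d z r) w \<noteq> 0 \<longrightarrow>
      (deriv ^^ n) (ratQ A d z r) w = poly p w / (poly (polP d z r) w * poly (polP0 d z) w ^ n))"

definition polR :: "complex poly \<Rightarrow> nat \<Rightarrow> (nat \<Rightarrow> complex) \<Rightarrow> (nat \<Rightarrow> nat) \<Rightarrow> nat \<Rightarrow> complex poly" where
  "polR A d z r n = smult (inverse (lead_coeff (numQ A d z r n))) (numQ A d z r n)"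

definition zprod :: "complex poly \<Rightarrow> complex set \<Rightarrow> real" where
  "zprod p K = (\<Prod>w\<in>{w\<in>K. poly p w = 0}. norm w ^ order w p)"

definition Phi :: "nat \<Rightarrow> (nat \<Rightarrow> complex) \<Rightarrow> complex \<Rightarrow> real" where
  "Phi d z w = Min ((\<lambda>k. cmod (w - z k)) ` {..<d})"

definition Vedge :: "nat \<Rightarrow> (nat \<Rightarrow> complex) \<Rightarrow> nat \<Rightarrow> nat \<Rightarrow> complex set" where
  "Vedge d z i j = {w. Phi d z w = cmod (w - z i) \<and> cmod (w - z i) = cmod (w - z j)}"

definition Vor :: "nat \<Rightarrow> (nat \<Rightarrow> complex) \<Rightarrow> complex set" where
  "Vor d z = (\<Union>i<d. \<Union>j<d. if i < j then Vedge d z i j else {})"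

end

theory Submission
  imports Defs "HOL-Complex_Analysis.Complex_Analysis" "HOL-Computational_Algebra.Fundamental_Theorem_Algebra"
begin


definition Epoly :: "nat \<Rightarrow> (nat \<Rightarrow> complex) \<Rightarrow> (nat \<Rightarrow> nat) \<Rightarrow> nat \<Rightarrow> complex poly" where
  "Epoly d z r n = (\<Sum>i<d. smult (of_nat (r i + n)) (\<Prod>j\<in>{..<d}-{i}. [:-z j,1:]))"

fun Nr :: "complex poly \<Rightarrow> nat \<Rightarrow> (nat \<Rightarrow> complex) \<Rightarrow> (nat \<Rightarrow> nat) \<Rightarrow> nat \<Rightarrow> complex poly" where
  "Nr A d z r 0 = A"
| "Nr A d z r (Suc n) = polP0 d z * pderiv (Nr A d z r n) - Epoly d z r n * Nr A d z r n"

lemma pderiv_prod_lin: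
  fixes c :: "'i \<Rightarrow> complex"
  assumes "finite I" "\<forall>i\<in>I. s i \<ge> 1"
  shows "(\<Prod>i\<in>I. [:-c i,1:]) * pderiv (\<Prod>i\<in>I. [:-c i,1:] ^ s i)
       = (\<Sum>i\<in>I. smult (of_nat (s i)) (\<Prod>j\<in>I-{i}. [:-c j,1:])) * (\<Prod>i\<in>I. [:-c i,1:] ^ s i)"
proof -
  have "(\<Prod>i\<in>I. [:-c i,1:]) * pderiv (\<Prod>i\<in>I. [:-c i,1:] ^ s i)
     = (\<Sum>a\<in>I. (\<Prod>i\<in>I. [:-c i,1:]) * ((\<Prod>i\<in>I-{a}. [:-c i,1:] ^ s i) * pderiv ([:-c a,1:] ^ s a)))"
    by (simp add: pderiv_prod sum_distrib_left)
  also have "\<dots> = (\<Sum>a\<in>I. smult (of_nat (s a)) (\<Prod>j\<in>I-{a}. [:-c j,1:]) * (\<Prod>i\<in>I. [:-c i,1:] ^ s i))"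
  proof (rule sum.cong[OF refl])
    fix a assume a: "a \<in> I"
    have e1: "(\<Prod>i\<in>I. [:-c i,1:]) = [:-c a,1:] * (\<Prod>i\<in>I-{a}. [:-c i,1:])"
      using a assms(1) by (simp add: prod.remove)
    have e2: "(\<Prod>i\<in>I. [:-c i,1:] ^ s i) = [:-c a,1:] ^ s a * (\<Prod>i\<in>I-{a}. [:-c i,1:] ^ s i)"
      using a assms(1) by (simp add: prod.remove)
    have e3: "[:-c a,1:] * [:-c a,1:] ^ (s a - 1) = [:-c a,1:] ^ s a"
      using assms(2) a by (cases "s a") auto
    have pd: "pderiv ([:-c a,1:] ^ s a) = smult (of_nat (s a)) ([:-c a,1:] ^ (s a - 1))"
      by (simp add: pderiv_power pderiv_pCons)
    then show "(\<Prod>i\<in>I. [:-c i,1:]) * ((\<Prod>i\<in>I-{a}. [:-c i,1:] ^ s i) * pderiv ([:-c a,1:] ^ s a))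
      = smult (of_nat (s a)) (\<Prod>j\<in>I-{a}. [:-c j,1:]) * (\<Prod>i\<in>I. [:-c i,1:] ^ s i)"
      unfolding e1 e2 pd by (simp only: e3[symmetric] mult_smult_left mult_smult_right mult_ac)
  qed
  also have "\<dots> = (\<Sum>i\<in>I. smult (of_nat (s i)) (\<Prod>j\<in>I-{i}. [:-c j,1:])) * (\<Prod>i\<in>I. [:-c i,1:] ^ s i)"
    by (simp add: sum_distrib_right)
  finally show ?thesis .
qed

lemma PP0n_eq: "polP d z r * polP0 d z ^ n = (\<Prod>i<d. [:-z i,1:] ^ (r i + n))"
  by (simp add: polP_def polP0_def prod_power_distrib prod.distrib power_add)

lemma key_identity:
  assumes "\<forall>i<d. r i \<ge> 1"
  shows "polP0 d z * pderiv (polP d z r * polP0 d z ^ n) = Epoly d z r n * (polP d z r * polP0 d z ^ n)"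
proof -
  have "finite {..<d}" "\<forall>i\<in>{..<d}. r i + n \<ge> 1" using assms by auto
  from pderiv_prod_lin[OF this, of z] show ?thesis unfolding PP0n_eq unfolding Epoly_def polP0_def .
qed

lemma frac_step:
  fixes a M c e p0 E :: complex
  assumes "M \<noteq> 0" "p0 \<noteq> 0" "p0 * e = E * M"
  shows "(a*M - c*e)/(M*M) = (p0*a - E*c)/(M*p0)"
proof -
  have "(a*M - c*e) * (M*p0) = (p0*a - E*c) * (M*M)" using assms(3) by algebra
  then show ?thesis using assms(1,2) by (simp add: frac_eq_eq)
qed

definition S0 :: "nat \<Rightarrow> (nat \<Rightarrow> complex) \<Rightarrow> complex set" where
  "S0 d z = {w. \<forall>i<d. w \<noteq> z i}"

lemma open_S0: "open (S0 d z)"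
proof -
  have "S0 d z = - (z ` {..<d})" unfolding S0_def by auto
  then show ?thesis by (simp add: open_Compl finite_imp_closed)
qed

lemma poly_polP: "poly (polP d z r) w = (\<Prod>i<d. (w - z i) ^ r i)"
  by (simp add: polP_def poly_prod)

lemma poly_polP0: "poly (polP0 d z) w = (\<Prod>i<d. (w - z i))"
  by (simp add: polP0_def poly_prod)

lemma polP_nz_iff:
  assumes "\<forall>i<d. r i \<ge> 1"
  shows "poly (polP d z r) w \<noteq> 0 \<longleftrightarrow> w \<in> S0 d z"
  using assms unfolding poly_polP S0_def by (auto simp: prod_zero_iff)

lemma polP0_nz: "w \<in> S0 d z \<Longrightarrow> poly (polP0 d z) w \<noteq> 0"
  unfolding poly_polP0 S0_def by (auto simp: prod_zero_iff)

lemma deriv_ratQ: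
  assumes "\<forall>i<d. r i \<ge> 1"
  shows "\<forall>w\<in>S0 d z. (deriv ^^ n) (ratQ A d z r) w
      = poly (Nr A d z r n) w / poly (polP d z r * polP0 d z ^ n) w"
proof (induction n)
  case 0
  then show ?case by (simp add: ratQ_def)
next
  case (Suc n)
  let ?M = "polP d z r * polP0 d z ^ n"
  let ?N = "Nr A d z r n"
  show ?case
  proof
    fix w assume w: "w \<in> S0 d z"
    have ev: "eventually (\<lambda>v. (deriv ^^ n) (ratQ A d z r) v = poly ?N v / poly ?M v) (nhds w)"
      unfolding eventually_nhds using Suc.IH w open_S0 by blast
    have Mnz: "poly ?M w \<noteq> 0"
      using w polP_nz_iff[OF assms] polP0_nz by (simp add: poly_mult)
    have "((\<lambda>v. poly ?N v / poly ?M v) has_field_derivative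
        (poly (pderiv ?N) w * poly ?M w - poly ?N w * poly (pderiv ?M) w) / (poly ?M w * poly ?M w)) (at w)"
      by (rule DERIV_divide[OF poly_DERIV poly_DERIV Mnz])
    then have "deriv (\<lambda>v. poly ?N v / poly ?M v) w
        = (poly (pderiv ?N) w * poly ?M w - poly ?N w * poly (pderiv ?M) w) / (poly ?M w * poly ?M w)"
      by (rule DERIV_imp_deriv)
    moreover have "deriv ((deriv ^^ n) (ratQ A d z r)) w = deriv (\<lambda>v. poly ?N v / poly ?M v) w"
      by (rule deriv_cong_ev[OF ev refl])
    moreover have kid: "poly (polP0 d z) w * poly (pderiv ?M) w = poly (Epoly d z r n) w * poly ?M w"
      using key_identity[OF assms, of z n] by (metis poly_mult)
    moreover have P0nz: "poly (polP0 d z) w \<noteq> 0" using polP0_nz w by blast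
    ultimately have "(deriv ^^ Suc n) (ratQ A d z r) w
        = (poly (pderiv ?N) w * poly ?M w - poly ?N w * poly (pderiv ?M) w) / (poly ?M w * poly ?M w)"
      by simp
    also have "\<dots> = (poly (polP0 d z) w * poly (pderiv ?N) w - poly (Epoly d z r n) w * poly ?N w)
         / (poly ?M w * poly (polP0 d z) w)"
      by (rule frac_step[OF Mnz P0nz kid])
    also have "\<dots> = poly (Nr A d z r (Suc n)) w / poly (polP d z r * polP0 d z ^ Suc n) w"
      by (simp add: poly_mult mult_ac)
    finally show "(deriv ^^ Suc n) (ratQ A d z r) w
      = poly (Nr A d z r (Suc n)) w / poly (polP d z r * polP0 d z ^ Suc n) w" .
  qed
qed

lemma S0_infinite: "infinite (S0 d z)"
proof -
  have "S0 d z = UNIV - z ` {..<d}" unfolding S0_def by auto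
  then show ?thesis using infinite_UNIV_char_0 by (metis Diff_infinite_finite finite_imageI finite_lessThan)
qed

lemma numQ_eq:
  assumes "\<forall>i<d. r i \<ge> 1"
  shows "numQ A d z r n = Nr A d z r n"
proof -
  have P: "\<forall>w. poly (polP d z r) w \<noteq> 0 \<longrightarrow>
      (deriv ^^ n) (ratQ A d z r) w = poly (Nr A d z r n) w / (poly (polP d z r) w * poly (polP0 d z) w ^ n)"
    using deriv_ratQ[OF assms] polP_nz_iff[OF assms] by (simp add: poly_mult poly_power)
  show ?thesis unfolding numQ_def
  proof (rule the_equality)
    show "\<forall>w. poly (polP d z r) w \<noteq> 0 \<longrightarrow>
      (deriv ^^ n) (ratQ A d z r) w = poly (Nr A d z r n) w / (poly (polP d z r) w * poly (polP0 d z) w ^ n)"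
      by (rule P)
  next
    fix p assume p: "\<forall>w. poly (polP d z r) w \<noteq> 0 \<longrightarrow>
      (deriv ^^ n) (ratQ A d z r) w = poly p w / (poly (polP d z r) w * poly (polP0 d z) w ^ n)"
    have "S0 d z \<subseteq> {w. poly (p - Nr A d z r n) w = 0}"
    proof
      fix w assume w: "w \<in> S0 d z"
      have "poly (polP d z r) w \<noteq> 0" using w polP_nz_iff[OF assms] by blast
      moreover have "poly (polP0 d z) w \<noteq> 0" using w polP0_nz by blast
      moreover have "(deriv ^^ n) (ratQ A d z r) w = poly p w / (poly (polP d z r) w * poly (polP0 d z) w ^ n)"
        using p \<open>poly (polP d z r) w \<noteq> 0\<close> by blast
      moreover have "(deriv ^^ n) (ratQ A d z r) w = poly (Nr A d z r n) w / (poly (polP d z r) w * poly (polP0 d z) w ^ n)"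
        using P \<open>poly (polP d z r) w \<noteq> 0\<close> by blast
      ultimately show "w \<in> {w. poly (p - Nr A d z r n) w = 0}"
        by simp
    qed
    then have "infinite {w. poly (p - Nr A d z r n) w = 0}"
      using S0_infinite finite_subset by blast
    then show "p = Nr A d z r n" using poly_roots_finite[of "p - Nr A d z r n"] by auto
  qed
qed


lemma Nr_add: "Nr (A1 + A2) d z r n = Nr A1 d z r n + Nr A2 d z r n"
  by (induction n) (simp_all add: pderiv_add algebra_simps)

lemma Nr_mulP:
  assumes "\<forall>i<d. r i \<ge> 1"
  shows "Nr (S * polP d z r) d z r n = (pderiv ^^ n) S * (polP d z r * polP0 d z ^ n)"
proof (induction n)
  case 0 then show ?case by simp
next
  case (Suc n)
  let ?M = "polP d z r * polP0 d z ^ n"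
  let ?S = "(pderiv ^^ n) S"
  have "Nr (S * polP d z r) d z r (Suc n) = polP0 d z * pderiv (?S * ?M) - Epoly d z r n * (?S * ?M)"
    using Suc by simp
  also have "\<dots> = polP0 d z * pderiv ?S * ?M + ?S * (polP0 d z * pderiv ?M) - Epoly d z r n * (?S * ?M)"
    by (simp add: pderiv_mult algebra_simps)
  also have "\<dots> = (pderiv ^^ Suc n) S * (polP d z r * polP0 d z ^ Suc n)"
    unfolding key_identity[OF assms] by (simp add: algebra_simps)
  finally show ?case .
qed

lemma pderiv_funpow_zero:
  fixes S :: "complex poly"
  shows "n > degree S \<Longrightarrow> (pderiv ^^ n) S = 0"
proof (induction n)
  case 0 then show ?case by simp
next
  case (Suc n)
  show ?case
  proof (cases "n > degree S")
    case True then show ?thesis using Suc by simp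
  next
    case False
    have "degree ((pderiv ^^ k) S) \<le> degree S - k" for k
      by (induction k) (auto simp: degree_pderiv)
    then have "degree ((pderiv ^^ n) S) = 0" using False Suc.prems by (metis diff_is_0_eq le_zero_eq less_Suc_eq_le)
    then show ?thesis by (simp add: pderiv_eq_0_iff)
  qed
qed

lemma Nr_mod:
  assumes "\<forall>i<d. r i \<ge> 1" "n > degree (A div polP d z r)"
  shows "Nr A d z r n = Nr (A mod polP d z r) d z r n"
proof -
  have "Nr A d z r n = Nr ((A div polP d z r) * polP d z r) d z r n + Nr (A mod polP d z r) d z r n"
    by (metis Nr_add div_mult_mod_eq)
  then show ?thesis using Nr_mulP[OF assms(1)] pderiv_funpow_zero[OF assms(2)] by simp
qed

lemma poly_polP0_za: "a < d \<Longrightarrow> poly (polP0 d z) (z a) = 0"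
  unfolding poly_polP0 by (auto simp: prod_zero_iff)

lemma poly_Epoly_za:
  assumes "a < d"
  shows "poly (Epoly d z r n) (z a) = of_nat (r a + n) * (\<Prod>j\<in>{..<d}-{a}. (z a - z j))"
proof -
  have "poly (Epoly d z r n) (z a) = (\<Sum>i<d. of_nat (r i + n) * (\<Prod>j\<in>{..<d}-{i}. (z a - z j)))"
    by (simp add: Epoly_def poly_sum poly_prod)
  also have "\<dots> = of_nat (r a + n) * (\<Prod>j\<in>{..<d}-{a}. (z a - z j))
       + (\<Sum>i\<in>{..<d}-{a}. of_nat (r i + n) * (\<Prod>j\<in>{..<d}-{i}. (z a - z j)))"
    using assms by (simp add: sum.remove)
  also have "(\<Sum>i\<in>{..<d}-{a}. of_nat (r i + n) * (\<Prod>j\<in>{..<d}-{i}. (z a - z j))) = 0"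
    using assms by (intro sum.neutral) (auto simp: prod_zero_iff)
  finally show ?thesis by simp
qed

lemma prod_za_nz:
  fixes z :: "nat \<Rightarrow> complex"
  assumes "a < d" "inj_on z {..<d}"
  shows "(\<Prod>j\<in>{..<d}-{a}. (z a - z j)) \<noteq> 0"
proof -
  have "\<forall>j\<in>{..<d}-{a}. z a \<noteq> z j" using assms unfolding inj_on_def by blast
  then have "\<forall>j\<in>{..<d}-{a}. z a - z j \<noteq> 0"
  proof (intro ballI)
    fix j assume "j \<in> {..<d}-{a}" "\<forall>j\<in>{..<d}-{a}. z a \<noteq> z j"
    then have "z a \<noteq> z j" by blast
    then show "z a - z j \<noteq> 0" by simp
  qed
  then show ?thesis by (subst prod_zero_iff) auto
qed

lemma Nr_za_nz:
  assumes "a < d" "inj_on z {..<d}" "poly A (z a) \<noteq> 0" "r a \<ge> 1"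
  shows "poly (Nr A d z r n) (z a) \<noteq> 0"
proof (induction n)
  case 0 then show ?case using assms by simp
next
  case (Suc n)
  have eq: "poly (Nr A d z r (Suc n)) (z a) = - poly (Epoly d z r n) (z a) * poly (Nr A d z r n) (z a)"
    by (simp add: poly_polP0_za[OF assms(1)])
  have nz: "complex_of_nat (r a + n) \<noteq> 0"
    using assms(4) by (simp only: of_nat_eq_0_iff)
  have "poly (Epoly d z r n) (z a) \<noteq> 0"
    unfolding poly_Epoly_za[OF assms(1)] using prod_za_nz[OF assms(1,2)] nz by (simp del: of_nat_add)
  then show ?case unfolding eq using Suc by simp
qed

lemma coeff_mult_le:
  fixes p q :: "'a::comm_semiring_1 poly"
  assumes "degree p \<le> a" "degree q \<le> b"
  shows "coeff (p * q) (a + b) = coeff p a * coeff q b"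
proof -
  have "coeff (p * q) (a + b) = (\<Sum>i\<le>a+b. coeff p i * coeff q (a + b - i))"
    by (simp add: coeff_mult)
  also have "\<dots> = coeff p a * coeff q (a + b - a) + (\<Sum>i\<in>{..a+b}-{a}. coeff p i * coeff q (a + b - i))"
    by (subst sum.remove[of _ a]) auto
  also have "(\<Sum>i\<in>{..a+b}-{a}. coeff p i * coeff q (a + b - i)) = 0"
  proof (intro sum.neutral ballI)
    fix i assume i: "i \<in> {..a+b}-{a}"
    show "coeff p i * coeff q (a + b - i) = 0"
    proof (cases "i > a")
      case True then show ?thesis using assms(1) by (simp add: coeff_eq_0)
    next
      case False then have "a + b - i > b" using i by auto
      then show ?thesis using assms(2) by (simp add: coeff_eq_0)
    qed
  qed
  finally show ?thesis by simp
qed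

lemma prod_lin_deg:
  fixes c :: "'i \<Rightarrow> complex"
  assumes "finite J"
  shows "degree (\<Prod>j\<in>J. [:-c j,1:]) = card J" "lead_coeff (\<Prod>j\<in>J. [:-c j,1:]) = 1"
proof -
  show "degree (\<Prod>j\<in>J. [:-c j,1:]) = card J" using assms by (simp add: degree_prod_sum_eq)
  have "lead_coeff (\<Prod>j\<in>J. [:-c j,1:]) = (\<Prod>j\<in>J. lead_coeff [:-c j,1:])"
    by (rule lead_coeff_prod)
  then show "lead_coeff (\<Prod>j\<in>J. [:-c j,1:]) = 1" by simp
qed

lemma degree_polP0: "degree (polP0 d z) = d" "lead_coeff (polP0 d z) = 1"
  unfolding polP0_def using prod_lin_deg[of "{..<d}" z] by simp_all

lemma degree_polP: "degree (polP d z r) = (\<Sum>i<d. r i)"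
  unfolding polP_def by (simp add: degree_prod_sum_eq degree_power_eq)

lemma coeff_Epoly:
  assumes "d \<ge> 1"
  shows "degree (Epoly d z r n) \<le> d - 1" "coeff (Epoly d z r n) (d - 1) = of_nat ((\<Sum>i<d. r i) + d * n)"
proof -
  have card: "card ({..<d}-{i}) = d - 1" if "i < d" for i using that by simp
  have c1: "coeff (\<Prod>j\<in>{..<d}-{i}. [:-z j,1:]) k = 0" if "i < d" "k > d - 1" for i k
    using prod_lin_deg(1)[of "{..<d}-{i}" z] card[OF that(1)] that(2) by (simp add: coeff_eq_0)
  have c2: "coeff (\<Prod>j\<in>{..<d}-{i}. [:-z j,1:]) (d - 1) = 1" if "i < d" for i
    using prod_lin_deg[of "{..<d}-{i}" z] card[OF that(1)] by simp
  have "coeff (Epoly d z r n) k = 0" if "k > d - 1" for k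
    unfolding Epoly_def using c1 that by (simp add: coeff_sum)
  then show "degree (Epoly d z r n) \<le> d - 1" by (simp add: degree_le)
  have "coeff (Epoly d z r n) (d - 1) = (\<Sum>i<d. of_nat (r i + n))"
    unfolding Epoly_def using c2 by (simp add: coeff_sum)
  also have "\<dots> = of_nat ((\<Sum>i<d. r i) + d * n)"
    by (simp add: sum.distrib)
  finally show "coeff (Epoly d z r n) (d - 1) = of_nat ((\<Sum>i<d. r i) + d * n)" .
qed


lemma Nr_deg_lead:
  assumes r1: "\<forall>i<d. r i \<ge> 1" and d1: "d \<ge> 1" and A0: "A \<noteq> 0"
    and dA: "degree A < degree (polP d z r)"
  shows "degree (Nr A d z r n) = degree A + n*(d-1) \<and>
         norm (lead_coeff (Nr A d z r n)) \<ge> norm (lead_coeff A) * fact n"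
proof (induction n)
  case 0 show ?case by simp
next
  case (Suc k)
  let ?N = "Nr A d z r k"
  let ?m = "degree ?N"
  let ?R0 = "\<Sum>i<d. r i"
  have m: "?m = degree A + k*(d-1)" and lb: "norm (lead_coeff ?N) \<ge> norm (lead_coeff A) * fact k"
    using Suc by auto
  have "norm (lead_coeff A) * fact k > 0" using A0 by simp
  then have leadnz: "lead_coeff ?N \<noteq> 0" using lb by auto
  have c1: "coeff (polP0 d z * pderiv ?N) (?m + d - 1) = of_nat ?m * lead_coeff ?N"
  proof (cases "?m = 0")
    case True then have "pderiv ?N = 0" by (simp add: pderiv_eq_0_iff)
    then show ?thesis using True by simp
  next
    case False
    have "coeff (polP0 d z * pderiv ?N) (d + (?m - 1)) = coeff (polP0 d z) d * coeff (pderiv ?N) (?m - 1)"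
      by (rule coeff_mult_le) (simp_all add: degree_polP0 degree_pderiv)
    moreover have "?m + d - 1 = d + (?m - 1)" using False by simp
    moreover have "coeff (pderiv ?N) (?m - 1) = of_nat ?m * lead_coeff ?N"
      using False by (simp add: coeff_pderiv)
    ultimately show ?thesis using degree_polP0 by simp
  qed
  have c2: "coeff (Epoly d z r k * ?N) (?m + d - 1) = of_nat (?R0 + d*k) * lead_coeff ?N"
  proof -
    have "coeff (Epoly d z r k * ?N) ((d - 1) + ?m) = coeff (Epoly d z r k) (d-1) * coeff ?N ?m"
      by (rule coeff_mult_le[OF coeff_Epoly(1)[OF d1]]) simp
    moreover have "(d - 1) + ?m = ?m + d - 1" using d1 by simp
    ultimately show ?thesis using coeff_Epoly(2)[OF d1] by (simp add: mult.commute)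
  qed
  have kd: "k*(d-1) + k = d*k" using d1 by (cases d) (auto simp: algebra_simps)
  have R0: "?R0 = degree (polP d z r)" by (simp add: degree_polP)
  have nat_eq: "?R0 + d*k = ?m + (?R0 + k - degree A)" using m dA R0 kd by linarith
  have coef: "coeff (Nr A d z r (Suc k)) (?m + d - 1) = - of_nat (?R0 + k - degree A) * lead_coeff ?N"
  proof -
    have "coeff (Nr A d z r (Suc k)) (?m + d - 1)
        = coeff (polP0 d z * pderiv ?N) (?m + d - 1) - coeff (Epoly d z r k * ?N) (?m + d - 1)"
      by simp
    also have "\<dots> = of_nat ?m * lead_coeff ?N - of_nat (?m + (?R0 + k - degree A)) * lead_coeff ?N"
      unfolding c1 c2 nat_eq ..
    also have "\<dots> = - of_nat (?R0 + k - degree A) * lead_coeff ?N"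
      by (simp add: algebra_simps)
    finally show ?thesis .
  qed
  have t_pos: "?R0 + k - degree A \<ge> k + 1" using dA R0 by linarith
  have cnz: "coeff (Nr A d z r (Suc k)) (?m + d - 1) \<noteq> 0"
  proof -
    have tnz: "(of_nat (?R0 + k - degree A) :: complex) \<noteq> 0"
      using t_pos by (simp only: of_nat_eq_0_iff)
    show ?thesis unfolding coef using tnz leadnz by (simp only: mult_eq_0_iff neg_equal_0_iff_equal) blast
  qed
  have degle: "degree (Nr A d z r (Suc k)) \<le> ?m + d - 1"
  proof -
    have "degree (polP0 d z * pderiv ?N) \<le> ?m + d - 1"
    proof (cases "?m = 0")
      case True then have "pderiv ?N = 0" by (simp add: pderiv_eq_0_iff)
      then show ?thesis by simp
    next
      case False then show ?thesis
        using degree_mult_le[of "polP0 d z" "pderiv ?N"] by (simp add: degree_polP0 degree_pderiv)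
    qed
    moreover have "degree (Epoly d z r k * ?N) \<le> ?m + d - 1"
      using degree_mult_le[of "Epoly d z r k" ?N] coeff_Epoly(1)[OF d1, of z r k] d1 by simp
    ultimately show ?thesis unfolding Nr.simps by (rule degree_diff_le)
  qed
  have deq: "degree (Nr A d z r (Suc k)) = ?m + d - 1" using degle le_degree[OF cnz] by simp
  have lc: "lead_coeff (Nr A d z r (Suc k)) = - of_nat (?R0 + k - degree A) * lead_coeff ?N"
    using deq coef by simp
  have nlc: "norm (lead_coeff (Nr A d z r (Suc k))) = of_nat (?R0 + k - degree A) * norm (lead_coeff ?N)"
    unfolding lc by (simp add: norm_mult)
  have "norm (lead_coeff A) * fact (Suc k) = (of_nat (k+1)) * (norm (lead_coeff A) * fact k)"
    by (simp add: algebra_simps)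
  also have "\<dots> \<le> of_nat (?R0 + k - degree A) * norm (lead_coeff ?N)"
  proof -
    have "real (k+1) \<le> real (?R0 + k - degree A)" using t_pos by (simp only: of_nat_le_iff)
    from mult_mono[OF this lb] show ?thesis by simp
  qed
  finally have "norm (lead_coeff A) * fact (Suc k) \<le> norm (lead_coeff (Nr A d z r (Suc k)))"
    using nlc by simp
  moreover have "degree (Nr A d z r (Suc k)) = degree A + Suc k * (d-1)"
    using deq m d1 by (cases d) (auto simp: algebra_simps)
  ultimately show ?case by simp
qed

lemma vieta:
  fixes p :: "complex poly"
  assumes "p \<noteq> 0"
  shows "(\<Prod>w\<in>{w. poly p w = 0}. cmod w ^ order w p) = cmod (poly p 0) / cmod (lead_coeff p)"
proof -
  have "poly p 0 = poly (smult (lead_coeff p) (\<Prod>w|poly p w = 0. [:-w, 1:] ^ order w p)) 0"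
    by (subst complex_poly_decompose) simp
  also have "\<dots> = lead_coeff p * (\<Prod>w|poly p w = 0. (- w) ^ order w p)"
    by (simp add: poly_prod)
  finally have "cmod (poly p 0) = cmod (lead_coeff p) * (\<Prod>w|poly p w = 0. cmod w ^ order w p)"
    by (simp add: norm_mult prod_norm[symmetric] norm_power)
  then show ?thesis using assms by simp
qed

lemma sum_order_le_degree:
  fixes p :: "complex poly"
  assumes "p \<noteq> 0"
  shows "(\<Sum>w\<in>{w. poly p w = 0}. order w p) = degree p"
proof -
  have "degree p = degree (smult (lead_coeff p) (\<Prod>w|poly p w = 0. [:-w, 1:] ^ order w p))"
    by (subst complex_poly_decompose) simp
  also have "\<dots> = degree (\<Prod>w|poly p w = 0. [:-w, 1:] ^ order w p)"
    using assms by simp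
  also have "\<dots> = (\<Sum>w\<in>{w. poly p w = 0}. order w p)"
    by (simp add: degree_prod_sum_eq degree_power_eq)
  finally show ?thesis by simp
qed

lemma zprod_nonneg: "zprod p K \<ge> 0"
  unfolding zprod_def by (simp add: prod_nonneg)

lemma zprod_le_pow:
  fixes p :: "complex poly"
  assumes "p \<noteq> 0" "R1 \<ge> 1" "\<forall>w\<in>K. poly p w = 0 \<longrightarrow> cmod w \<le> R1"
  shows "zprod p K \<le> R1 ^ degree p"
proof -
  have fin: "finite {w\<in>K. poly p w = 0}" using poly_roots_finite[OF assms(1)] by (simp add: finite_subset)
  have "zprod p K \<le> (\<Prod>w\<in>{w\<in>K. poly p w = 0}. R1 ^ order w p)"
    unfolding zprod_def using assms(3) by (intro prod_mono) (auto intro: power_mono)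
  also have "\<dots> = R1 ^ (\<Sum>w\<in>{w\<in>K. poly p w = 0}. order w p)" by (simp add: power_sum)
  also have "\<dots> \<le> R1 ^ degree p"
  proof (rule power_increasing[OF _ assms(2)])
    have "(\<Sum>w\<in>{w\<in>K. poly p w = 0}. order w p) \<le> (\<Sum>w\<in>{w. poly p w = 0}. order w p)"
      by (rule sum_mono2) (use poly_roots_finite[OF assms(1)] in auto)
    then show "(\<Sum>w\<in>{w\<in>K. poly p w = 0}. order w p) \<le> degree p"
      using sum_order_le_degree[OF assms(1)] by simp
  qed
  finally show ?thesis .
qed

lemma zprod_ge1:
  assumes "\<forall>w\<in>K. poly p w = 0 \<longrightarrow> cmod w \<ge> 1"
  shows "zprod p K \<ge> 1"
  unfolding zprod_def using assms by (intro prod_ge_1) (auto intro: one_le_power)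

lemma zprod_split:
  fixes p :: "complex poly"
  assumes "p \<noteq> 0"
  shows "zprod p K * zprod p (UNIV - K) = (\<Prod>w\<in>{w. poly p w = 0}. cmod w ^ order w p)"
proof -
  have fin: "finite {w. poly p w = 0}" using poly_roots_finite[OF assms] .
  have "{w. poly p w = 0} = {w\<in>K. poly p w = 0} \<union> {w\<in>UNIV - K. poly p w = 0}" by auto
  then show ?thesis unfolding zprod_def
    by (metis (no_types, lifting) fin finite_Un prod.union_disjoint disjoint_iff mem_Collect_eq DiffD2)
qed

lemma zprod_smult:
  fixes p :: "complex poly"
  assumes "c \<noteq> 0"
  shows "zprod (smult c p) K = zprod p K"
  unfolding zprod_def using assms by (simp add: order_smult)


lemma local_split:
  fixes G A :: "complex poly"
  assumes G: "poly G \<rho> \<noteq> 0"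
  shows "\<exists>T B. degree T \<le> k - 1 \<and> A = T * G + [:-\<rho>,1:]^k * B"
proof (induction k)
  case 0 show ?case by (rule exI[of _ 0], rule exI[of _ A]) simp
next
  case (Suc k)
  then obtain T B where TB: "degree T \<le> k - 1" "A = T * G + [:-\<rho>,1:]^k * B" by blast
  define c where "c = poly B \<rho> / poly G \<rho>"
  have "poly (B - smult c G) \<rho> = 0" using G by (simp add: c_def)
  then have "[:-\<rho>,1:] dvd (B - smult c G)" using poly_eq_0_iff_dvd by blast
  then obtain B' where B': "B - smult c G = [:-\<rho>,1:] * B'" by (rule dvdE)
  define T' where "T' = T + smult c ([:-\<rho>,1:]^k)"
  have "degree T' \<le> k"
  proof -
    have "degree (smult c ([:-\<rho>,1:]^k)) \<le> k"
      using degree_smult_le[of c "[:-\<rho>,1:]^k"] by (simp add: degree_power_eq)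
    moreover have "degree T \<le> k" using TB(1) by simp
    ultimately show ?thesis unfolding T'_def by (meson degree_add_le)
  qed
  moreover have "A = T' * G + [:-\<rho>,1:]^Suc k * B'"
  proof -
    have "[:-\<rho>,1:]^Suc k * B' = [:-\<rho>,1:]^k * ([:-\<rho>,1:] * B')" by (simp only: power_Suc2 mult.assoc)
    also have "\<dots> = [:-\<rho>,1:]^k * (B - smult c G)" by (simp only: B')
    finally have "[:-\<rho>,1:]^Suc k * B' = [:-\<rho>,1:]^k * (B - smult c G)" .
    then show ?thesis unfolding T'_def using TB(2) by (simp add: algebra_simps)
  qed
  ultimately show ?case by auto
qed

lemma taylor_poly:
  fixes T :: "complex poly"
  assumes "degree T < r"
  shows "poly T v = (\<Sum>k<r. coeff (pcompose T [:\<rho>,1:]) k * (v - \<rho>)^k)"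
proof -
  let ?p = "pcompose T [:\<rho>,1:]"
  have "poly T v = poly ?p (v - \<rho>)" by (simp add: poly_pcompose)
  also have "\<dots> = (\<Sum>k\<le>degree ?p. coeff ?p k * (v - \<rho>)^k)" by (rule poly_altdef)
  also have "\<dots> = (\<Sum>k<r. coeff ?p k * (v - \<rho>)^k)"
  proof (rule sum.mono_neutral_right[symmetric])
    have "degree ?p = degree T" by (simp add: degree_pcompose)
    then show "{..degree ?p} \<subseteq> {..<r}" using assms by auto
    show "\<forall>i\<in>{..<r} - {..degree ?p}. coeff ?p i * (v - \<rho>) ^ i = 0" by (auto simp: coeff_eq_0)
  qed simp
  finally show ?thesis .
qed

lemma coeff0_pcompose: "coeff (pcompose T [:\<rho>,1:]) 0 = poly T (\<rho>::complex)"
  by (simp add: poly_0_coeff_0[symmetric] poly_pcompose)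

lemma deriv_alg:
  fixes c X :: complex
  assumes "X \<noteq> 0"
  shows "(0 * X ^ M - c * (of_nat M * ((1 - 0) * X ^ (M - Suc 0)))) / (X ^ M * X ^ M) = - c * of_nat M / X^(M+1)"
proof (cases M)
  case 0 then show ?thesis by simp
next
  case (Suc m)
  then show ?thesis using assms by (simp add: field_simps power_add)
qed

lemma deriv_inv_pow:
  fixes c \<rho> v :: complex
  assumes "v \<noteq> \<rho>"
  shows "((\<lambda>v. c / (v - \<rho>)^M) has_field_derivative (- c * of_nat M / (v - \<rho>)^(M+1))) (at v)"
proof -
  have nz: "v - \<rho> \<noteq> 0" using assms by simp
  have d1: "((\<lambda>v. v - \<rho>) has_field_derivative (1 - 0)) (at v)" by (intro DERIV_diff DERIV_ident DERIV_const)
  note d2 = DERIV_power[OF d1, of M]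
  have pnz: "(v - \<rho>)^M \<noteq> 0" using nz by simp
  note d = DERIV_divide[OF DERIV_const[of c] d2 pnz]
  show ?thesis
  proof (rule DERIV_cong[OF d])
    show "(0 * (v - \<rho>) ^ M - c * (of_nat M * ((1 - 0) * (v - \<rho>) ^ (M - Suc 0)))) / ((v - \<rho>) ^ M * (v - \<rho>) ^ M)
       = - c * of_nat M / (v - \<rho>)^(M+1)"
      by (rule deriv_alg[OF nz])
  qed
qed

lemma term_eq:
  fixes t X :: complex
  shows "- (t * (-1)^n * of_nat P) * of_nat M / X^(M + 1) = t * (-1)^Suc n * of_nat (P * M) / X^(M + 1)"
  by simp

lemma higher_deriv_main:
  fixes t :: "nat \<Rightarrow> complex" and \<rho> :: complex
  assumes "v \<noteq> \<rho>"
  shows "(deriv ^^ n) (\<lambda>v. \<Sum>k<r. t k / (v - \<rho>)^(r - k)) v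
       = (\<Sum>k<r. t k * (-1)^n * of_nat (pochhammer (r - k) n) / (v - \<rho>)^(r - k + n))"
  using assms
proof (induction n arbitrary: v)
  case 0 then show ?case by simp
next
  case (Suc n)
  have ev: "eventually (\<lambda>x. (deriv ^^ n) (\<lambda>v. \<Sum>k<r. t k / (v - \<rho>)^(r - k)) x
       = (\<Sum>k<r. t k * (-1)^n * of_nat (pochhammer (r - k) n) / (x - \<rho>)^(r - k + n))) (nhds v)"
    using t1_space_nhds[OF Suc.prems] by (rule eventually_mono) (use Suc.IH in blast)
  have "((\<lambda>x. \<Sum>k<r. t k * (-1)^n * of_nat (pochhammer (r - k) n) / (x - \<rho>)^(r - k + n)) has_field_derivative
      (\<Sum>k<r. - (t k * (-1)^n * of_nat (pochhammer (r - k) n)) * of_nat (r - k + n) / (v - \<rho>)^(r - k + n + 1))) (at v)"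
    by (intro DERIV_sum deriv_inv_pow Suc.prems)
  then have "deriv (\<lambda>x. \<Sum>k<r. t k * (-1)^n * of_nat (pochhammer (r - k) n) / (x - \<rho>)^(r - k + n)) v
      = (\<Sum>k<r. - (t k * (-1)^n * of_nat (pochhammer (r - k) n)) * of_nat (r - k + n) / (v - \<rho>)^(r - k + n + 1))"
    by (rule DERIV_imp_deriv)
  also have "\<dots> = (\<Sum>k<r. t k * (-1)^Suc n * of_nat (pochhammer (r - k) (Suc n)) / (v - \<rho>)^(r - k + Suc n))"
  proof (intro sum.cong refl)
    fix k assume "k \<in> {..<r}"
    have p: "pochhammer (r - k) (Suc n) = pochhammer (r-k) n * (r - k + n)" by (simp add: pochhammer_Suc)
    have q: "r - k + Suc n = (r - k + n) + 1" by simp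
    show "- (t k * (-1)^n * of_nat (pochhammer (r - k) n)) * of_nat (r - k + n) / (v - \<rho>)^(r - k + n + 1)
      = t k * (-1)^Suc n * of_nat (pochhammer (r - k) (Suc n)) / (v - \<rho>)^(r - k + Suc n)"
      unfolding p q by (rule term_eq)
  qed
  finally show ?case using deriv_cong_ev[OF ev refl] by simp
qed

lemma poch_mono: "(a::nat) \<le> b \<Longrightarrow> pochhammer a n \<le> pochhammer b n"
  by (induction n) (auto simp: pochhammer_Suc intro: mult_le_mono)

lemma fact_le_poch: "(r::nat) \<ge> 1 \<Longrightarrow> fact n \<le> pochhammer r n"
  using poch_mono[of 1 r n] by (simp add: pochhammer_fact)

lemma poch_pred: "(r::nat) \<ge> 1 \<Longrightarrow> pochhammer (r - 1) n * (n + 1) \<le> r * pochhammer r n"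
proof (cases "r = 1")
  case True then show ?thesis by (cases n) (auto simp: pochhammer_0_left)
next
  case False
  assume r1: "r \<ge> 1"
  have id: "pochhammer (r - 1) n * (r - 1 + n) = (r - 1) * pochhammer r n"
    using pochhammer_Suc[of "r - 1" n] pochhammer_rec[of "r - 1" n] r1 by simp
  have "pochhammer (r - 1) n * (n + 1) \<le> pochhammer (r - 1) n * (r - 1 + n)"
    using False r1 by (intro mult_le_mono2) simp
  also have "\<dots> = (r - 1) * pochhammer r n" by (rule id)
  also have "\<dots> \<le> r * pochhammer r n" by simp
  finally show ?thesis .
qed

lemma finite_uniform_pos:
  fixes f :: "'j \<Rightarrow> 'w \<Rightarrow> real"
  assumes "finite J" "\<forall>j\<in>J. \<exists>e>0. \<forall>w\<in>K. e \<le> f j w"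
  shows "\<exists>e>0. \<forall>j\<in>J. \<forall>w\<in>K. e \<le> f j w"
  using assms
proof (induction J rule: finite_induct)
  case empty then show ?case by (intro exI[of _ 1]) simp
next
  case (insert j J)
  then obtain e1 where e1: "e1 > 0" "\<forall>i\<in>J. \<forall>w\<in>K. e1 \<le> f i w" by auto
  from insert obtain e2 where e2: "e2 > 0" "\<forall>w\<in>K. e2 \<le> f j w" by auto
  show ?case using e1 e2 by (intro exI[of _ "min e1 e2"]) force
qed

lemma compact_pos_lb:
  fixes f :: "'a::topological_space \<Rightarrow> real"
  assumes "compact K" "continuous_on K f" "\<forall>x\<in>K. 0 < f x"
  shows "\<exists>e>0. \<forall>x\<in>K. e \<le> f x"
proof (cases "K = {}")
  case True then show ?thesis by (intro exI[of _ 1]) simp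
next
  case False
  then obtain x0 where "x0 \<in> K" "\<forall>y\<in>K. f x0 \<le> f y" using continuous_attains_inf[OF assms(1) False assms(2)] by blast
  then show ?thesis using assms(3) by blast
qed


lemma est_core:
  fixes X Hn :: complex and t :: "nat \<Rightarrow> complex"
  assumes X: "X \<noteq> 0" and ra: "ra \<ge> 1" and XL: "norm X \<le> L" and L1: "L \<ge> 1"
    and Hb: "norm (X^(ra+n) * Hn) \<le> Eh"
  shows "norm (X^(ra+n) * ((\<Sum>k<ra. t k * (-1)^n * of_nat (pochhammer (ra-k) n) / X^(ra-k+n)) + Hn))
     \<ge> norm (t 0) * real (pochhammer ra n) - (\<Sum>k\<in>{1..<ra}. norm (t k)) * L^ra * real (pochhammer (ra - 1) n) - Eh"
proof -
  have trm: "X^(ra+n) * (t k * (-1)^n * of_nat (pochhammer (ra-k) n) / X^(ra-k+n))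
      = t k * (-1)^n * of_nat (pochhammer (ra-k) n) * X^k" if "k < ra" for k
  proof -
    have "X^(ra+n) = X^k * X^(ra-k+n)" using that by (simp add: power_add[symmetric])
    then show ?thesis using X by (simp add: field_simps)
  qed
  have set: "{..<ra} = insert 0 {1..<ra}" using ra by auto
  have "X^(ra+n) * (\<Sum>k<ra. t k * (-1)^n * of_nat (pochhammer (ra-k) n) / X^(ra-k+n))
      = (\<Sum>k<ra. t k * (-1)^n * of_nat (pochhammer (ra-k) n) * X^k)"
    unfolding sum_distrib_left by (rule sum.cong[OF refl], rule trm) simp
  also have "\<dots> = t 0 * (-1)^n * of_nat (pochhammer ra n)
      + (\<Sum>k\<in>{1..<ra}. t k * (-1)^n * of_nat (pochhammer (ra-k) n) * X^k)"
    unfolding set by (subst sum.insert) auto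
  finally have eq: "X^(ra+n) * ((\<Sum>k<ra. t k * (-1)^n * of_nat (pochhammer (ra-k) n) / X^(ra-k+n)) + Hn)
      = t 0 * (-1)^n * of_nat (pochhammer ra n)
      + (\<Sum>k\<in>{1..<ra}. t k * (-1)^n * of_nat (pochhammer (ra-k) n) * X^k) + X^(ra+n) * Hn"
    by (simp add: distrib_left)
  have n0: "norm (t 0 * (-1)^n * of_nat (pochhammer ra n)) = norm (t 0) * real (pochhammer ra n)"
    by (simp add: norm_mult norm_power)
  have n1: "norm (\<Sum>k\<in>{1..<ra}. t k * (-1)^n * of_nat (pochhammer (ra-k) n) * X^k)
      \<le> (\<Sum>k\<in>{1..<ra}. norm (t k)) * L^ra * real (pochhammer (ra - 1) n)"
  proof -
    have "norm (\<Sum>k\<in>{1..<ra}. t k * (-1)^n * of_nat (pochhammer (ra-k) n) * X^k)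
       \<le> (\<Sum>k\<in>{1..<ra}. norm (t k * (-1)^n * of_nat (pochhammer (ra-k) n) * X^k))"
      by (rule norm_sum)
    also have "\<dots> \<le> (\<Sum>k\<in>{1..<ra}. norm (t k) * (L^ra * real (pochhammer (ra - 1) n)))"
    proof (rule sum_mono)
      fix k assume k: "k \<in> {1..<ra}"
      have p: "real (pochhammer (ra-k) n) \<le> real (pochhammer (ra - 1) n)"
      proof -
        have "ra - k \<le> ra - 1" using k by auto
        from poch_mono[OF this, of n] show ?thesis by (simp only: of_nat_le_iff)
      qed
      have x: "norm X ^ k \<le> L^ra"
      proof -
        have "norm X ^ k \<le> L ^ k" by (rule power_mono[OF XL]) simp
        also have "\<dots> \<le> L ^ ra" using k L1 by (intro power_increasing) auto
        finally show ?thesis .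
      qed
      have "norm (t k * (-1)^n * of_nat (pochhammer (ra-k) n) * X^k)
          = norm (t k) * (real (pochhammer (ra-k) n) * norm X ^ k)"
        by (simp add: norm_mult norm_power)
      also have "\<dots> \<le> norm (t k) * (real (pochhammer (ra - 1) n) * L^ra)"
        by (intro mult_left_mono mult_mono p x) auto
      finally show "norm (t k * (-1)^n * of_nat (pochhammer (ra-k) n) * X^k) \<le> norm (t k) * (L^ra * real (pochhammer (ra - 1) n))"
        by (simp add: mult_ac)
    qed
    also have "\<dots> = (\<Sum>k\<in>{1..<ra}. norm (t k)) * L^ra * real (pochhammer (ra - 1) n)"
      by (simp add: sum_distrib_left mult_ac)
    finally show ?thesis .
  qed
  have tri: "norm (a + b + c) \<ge> norm a - norm b - norm c" for a b c :: complex
    by (smt (verit) norm_triangle_ineq2 norm_triangle_ineq4 norm_minus_cancel diff_minus_eq_add)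
  show ?thesis unfolding eq using tri[of "t 0 * (-1)^n * of_nat (pochhammer ra n)"
      "\<Sum>k\<in>{1..<ra}. t k * (-1)^n * of_nat (pochhammer (ra-k) n) * X^k" "X^(ra+n) * Hn"] n0 n1 Hb
    by linarith
qed

lemma final_ineq:
  fixes P P1 F S Lr M qn t0 :: real and n ra :: nat
  assumes "P > 0" "P1 * (real n + 1) \<le> real ra * P" "F \<le> P" "S \<ge> 0" "Lr \<ge> 0" "M \<ge> 0" "qn \<ge> 0"
    "S * Lr * real ra / (real n + 1) + Lr * M * qn < t0"
  shows "t0 * P - S * Lr * P1 - Lr * F * M * qn > 0"
proof -
  have a: "P1 \<le> real ra * P / (real n + 1)" using assms(2) by (simp add: field_simps)
  have "S * Lr * P1 \<le> S * Lr * (real ra * P / (real n + 1))"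
    by (rule mult_left_mono[OF a]) (use assms in auto)
  moreover have "Lr * F * M * qn \<le> Lr * P * M * qn"
    using assms(3-7) by (simp add: mult_right_mono mult_left_mono)
  moreover have "P * (S * Lr * real ra / (real n + 1) + Lr * M * qn) < P * t0"
    using assms(1,8) by simp
  ultimately show ?thesis by (simp add: algebra_simps)
qed


lemma zero_free_cell:
  fixes A :: "complex poly" and z :: "nat \<Rightarrow> complex"
  assumes inj: "inj_on z {..<d}" and r1: "\<forall>i<d. r i \<ge> 1" and Anz: "\<forall>i<d. poly A (z i) \<noteq> 0"
    and a: "a < d"
    and Dc: "compact D" and D1: "D \<subseteq> cball 0 1"
    and gap: "\<forall>w\<in>D. \<forall>j<d. j \<noteq> a \<longrightarrow> cmod (w - z a) < cmod (w - z j)"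
  shows "\<exists>N. \<forall>n\<ge>N. \<forall>w\<in>D. poly (Nr A d z r n) w \<noteq> 0"
proof -
  define \<rho> where "\<rho> = z a"
  define ra where "ra = r a"
  define J where "J = {..<d} - {a}"
  have ra1: "ra \<ge> 1" using r1 a by (simp add: ra_def)
  have finJ: "finite J" by (simp add: J_def)
  obtain e where e: "e > 0" "\<forall>j\<in>J. \<forall>w\<in>D. e \<le> cmod (w - z j) - cmod (w - \<rho>)"
  proof -
    have "\<forall>j\<in>J. \<exists>e>0. \<forall>w\<in>D. e \<le> cmod (w - z j) - cmod (w - \<rho>)"
    proof
      fix j assume j: "j \<in> J"
      show "\<exists>e>0. \<forall>w\<in>D. e \<le> cmod (w - z j) - cmod (w - \<rho>)"
        by (rule compact_pos_lb[OF Dc]) (use gap j in \<open>auto intro!: continuous_intros simp: J_def \<rho>_def\<close>)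
    qed
    from finite_uniform_pos[OF finJ this] show ?thesis using that by blast
  qed
  define \<epsilon> where "\<epsilon> = e / 2"
  have \<epsilon>: "\<epsilon> > 0" using e by (simp add: \<epsilon>_def)
  have gapw: "cmod (w - \<rho>) + 2 * \<epsilon> \<le> cmod (w - z j)" if "w \<in> D" "j \<in> J" for w j
    using e that by (force simp: \<epsilon>_def)
  define G where "G = (\<Prod>i\<in>J. [:-z i,1:]^(r i))"
  have Pfac: "polP d z r = [:-\<rho>,1:]^ra * G"
    unfolding polP_def G_def J_def \<rho>_def ra_def using a by (simp add: prod.remove)
  have polyG: "poly G v = (\<Prod>i\<in>J. (v - z i)^(r i))" for v by (simp add: G_def poly_prod)
  have Gnz: "poly G v \<noteq> 0" if "\<forall>j\<in>J. v \<noteq> z j" for v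
    using that finJ by (simp add: polyG prod_zero_iff)
  have rhoJ: "\<forall>j\<in>J. \<rho> \<noteq> z j" using inj a unfolding J_def \<rho>_def inj_on_def by blast
  obtain T B where TB: "degree T \<le> ra - 1" "A = T * G + [:-\<rho>,1:]^ra * B"
    using local_split[OF Gnz[OF rhoJ], of ra A] by blast
  define t where "t k = coeff (pcompose T [:\<rho>,1:]) k" for k
  have degT: "degree T < ra" using TB(1) ra1 by linarith
  have t0: "t 0 \<noteq> 0"
  proof -
    have "poly A \<rho> = poly T \<rho> * poly G \<rho>"
      using ra1 by (subst TB(2)) (simp add: zero_power)
    then show ?thesis using Anz a unfolding t_def coeff0_pcompose \<rho>_def by auto
  qed
  define fm where "fm v = (\<Sum>k<ra. t k / (v - \<rho>)^(ra - k))" for v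
  define h where "h v = poly B v / poly G v" for v
  have S0J: "\<forall>j\<in>J. v \<noteq> z j" "v \<noteq> \<rho>" if "v \<in> S0 d z" for v
    using that a unfolding S0_def J_def \<rho>_def by auto
  have split: "ratQ A d z r v = fm v + h v" if v: "v \<in> S0 d z" for v
  proof -
    have vr: "v - \<rho> \<noteq> 0" using S0J(2)[OF v] by simp
    have gv: "poly G v \<noteq> 0" using Gnz S0J(1)[OF v] by blast
    have tay: "poly T v = (\<Sum>k<ra. t k * (v - \<rho>)^k)" unfolding t_def by (rule taylor_poly[OF degT])
    have "poly T v / (v - \<rho>)^ra = (\<Sum>k<ra. t k * (v - \<rho>)^k / (v - \<rho>)^ra)"
      unfolding tay by (simp add: sum_divide_distrib)
    also have "\<dots> = fm v" unfolding fm_def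
    proof (rule sum.cong[OF refl])
      fix k assume "k \<in> {..<ra}"
      then have "(v - \<rho>)^ra = (v - \<rho>)^k * (v - \<rho>)^(ra - k)" by (simp add: power_add[symmetric])
      then show "t k * (v - \<rho>)^k / (v - \<rho>)^ra = t k / (v - \<rho>)^(ra - k)" using vr by simp
    qed
    finally have fmv: "poly T v / (v - \<rho>)^ra = fm v" .
    have "ratQ A d z r v = (poly T v * poly G v + (v - \<rho>)^ra * poly B v) / ((v - \<rho>)^ra * poly G v)"
      unfolding ratQ_def Pfac by (subst TB(2)) (simp add: poly_mult)
    also have "\<dots> = poly T v / (v - \<rho>)^ra + h v"
      using vr gv unfolding h_def by (simp add: field_simps)
    finally show ?thesis using fmv by simp
  qed
  have hol_fm: "fm holomorphic_on S0 d z"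
  proof -
    have "(\<lambda>v. \<Sum>k<ra. t k / (v - \<rho>)^(ra - k)) holomorphic_on S0 d z"
      by (intro holomorphic_intros) (use S0J in force)
    then show ?thesis unfolding fm_def[abs_def] .
  qed
  have hol_h: "h holomorphic_on S0 d z"
  proof -
    have "(\<lambda>v. poly B v / poly G v) holomorphic_on S0 d z"
      by (intro holomorphic_intros) (use Gnz S0J in blast)
    then show ?thesis unfolding h_def[abs_def] .
  qed
  have dsplit: "(deriv ^^ n) (ratQ A d z r) w = (deriv ^^ n) fm w + (deriv ^^ n) h w" if w: "w \<in> S0 d z" for n w
  proof -
    have ev: "eventually (\<lambda>v. ratQ A d z r v = fm v + h v) (nhds w)"
      unfolding eventually_nhds using open_S0 w split by blast
    have "(deriv ^^ n) (ratQ A d z r) w = (deriv ^^ n) (\<lambda>v. fm v + h v) w"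
      by (rule higher_deriv_cong_ev[OF ev refl])
    also have "\<dots> = (deriv ^^ n) fm w + (deriv ^^ n) h w"
      by (rule higher_deriv_add[OF hol_fm hol_h open_S0 w])
    finally show ?thesis .
  qed
  define L where "L = 2 + cmod \<rho>"
  define Kc where "Kc = cball 0 (L + \<epsilon>) \<inter> {\<zeta>. \<forall>j\<in>J. \<epsilon> \<le> cmod (\<zeta> - z j)}"
  have Kc_comp: "compact Kc"
  proof -
    have "{\<zeta>. \<forall>j\<in>J. \<epsilon> \<le> cmod (\<zeta> - z j)} = (\<Inter>j\<in>J. {\<zeta>. \<epsilon> \<le> cmod (\<zeta> - z j)})" by auto
    moreover have "closed (\<Inter>j\<in>J. {\<zeta>. \<epsilon> \<le> cmod (\<zeta> - z j)})"
      by (intro closed_INT ballI closed_Collect_le continuous_intros)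
    ultimately have "closed {\<zeta>. \<forall>j\<in>J. \<epsilon> \<le> cmod (\<zeta> - z j)}" by simp
    then show ?thesis unfolding Kc_def by (intro compact_Int_closed) auto
  qed
  have KcG: "poly G \<zeta> \<noteq> 0" if "\<zeta> \<in> Kc" for \<zeta>
    using that \<epsilon> Gnz unfolding Kc_def by force
  have cont_h: "continuous_on Kc h"
    unfolding h_def[abs_def] by (intro continuous_intros) (use KcG in blast)
  obtain M where M: "M > 0" "\<forall>\<zeta>\<in>Kc. cmod (h \<zeta>) \<le> M"
  proof -
    have "bounded (h ` Kc)" by (rule compact_imp_bounded[OF compact_continuous_image[OF cont_h Kc_comp]])
    then show ?thesis using that unfolding bounded_pos by auto
  qed
  define q where "q = L / (L + \<epsilon>)"
  have L1: "L \<ge> 1" by (simp add: L_def)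
  have q01: "0 \<le> q" "q < 1" using L1 \<epsilon> by (auto simp: q_def)
  have key: "norm ((w - \<rho>)^(ra+n) * (deriv ^^ n) (ratQ A d z r) w)
      \<ge> norm (t 0) * real (pochhammer ra n) - (\<Sum>k\<in>{1..<ra}. norm (t k)) * L^ra * real (pochhammer (ra - 1) n)
        - L^ra * fact n * M * q^n"
    if w: "w \<in> D" "w \<noteq> \<rho>" for w n
  proof -
    have wS0: "w \<in> S0 d z"
    proof -
      have "\<forall>j\<in>J. w \<noteq> z j"
      proof
        fix j assume "j \<in> J"
        then have "cmod (w - \<rho>) + 2 * \<epsilon> \<le> cmod (w - z j)" using gapw[OF w(1)] by blast
        then have "cmod (w - z j) > 0" using \<epsilon> norm_ge_zero[of "w - \<rho>"] by linarith
        then show "w \<noteq> z j" by auto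
      qed
      then show ?thesis using w(2) unfolding S0_def J_def \<rho>_def by auto
    qed
    define u where "u = cmod (w - \<rho>)"
    have u0: "u > 0" using w(2) by (simp add: u_def)
    have uL: "u \<le> L"
    proof -
      have "cmod w \<le> 1" using w(1) D1 by auto
      then show ?thesis unfolding u_def L_def using norm_triangle_ineq4[of w \<rho>] by linarith
    qed
    define s where "s = u + \<epsilon>"
    have s0: "s > 0" using u0 \<epsilon> by (simp add: s_def)
    have cb: "cball w s \<subseteq> Kc"
    proof
      fix \<zeta> assume "\<zeta> \<in> cball w s"
      then have d: "cmod (w - \<zeta>) \<le> s" by (simp add: dist_norm)
      have "cmod \<zeta> \<le> L + \<epsilon>"
      proof -
        have "cmod w \<le> 1" using w(1) D1 by auto
        moreover have "cmod \<zeta> \<le> cmod w + cmod (w - \<zeta>)" using norm_triangle_ineq2[of \<zeta> w] norm_minus_commute[of \<zeta> w] by linarith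
        moreover have "u \<le> 1 + cmod \<rho>"
          using \<open>cmod w \<le> 1\<close> norm_triangle_ineq4[of w \<rho>] unfolding u_def by linarith
        ultimately show ?thesis using d unfolding s_def L_def by linarith
      qed
      moreover have "\<forall>j\<in>J. \<epsilon> \<le> cmod (\<zeta> - z j)"
      proof
        fix j assume j: "j \<in> J"
        have "cmod (w - z j) \<le> cmod (w - \<zeta>) + cmod (\<zeta> - z j)"
          using norm_triangle_ineq[of "w - \<zeta>" "\<zeta> - z j"] by simp
        then show "\<epsilon> \<le> cmod (\<zeta> - z j)" using gapw[OF w(1) j] d unfolding s_def u_def by linarith
      qed
      ultimately show "\<zeta> \<in> Kc" unfolding Kc_def by auto
    qed
    have Hb: "norm ((deriv ^^ n) h w) \<le> fact n * M / s^n"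
    proof (rule Cauchy_inequality)
      show "h holomorphic_on ball w s"
        unfolding h_def[abs_def] by (intro holomorphic_intros) (meson KcG cb ball_subset_cball subsetD)
      show "continuous_on (cball w s) h" using cont_h cb by (rule continuous_on_subset)
      show "0 < s" by (rule s0)
      show "cmod (h x) \<le> M" if "cmod (w - x) = s" for x
        using M(2) cb that by (auto simp: dist_norm)
    qed
    have Eh: "norm ((w - \<rho>)^(ra+n) * (deriv ^^ n) h w) \<le> L^ra * fact n * M * q^n"
    proof -
      have "norm ((w - \<rho>)^(ra+n) * (deriv ^^ n) h w) \<le> u^(ra+n) * (fact n * M / s^n)"
        unfolding norm_mult norm_power u_def[symmetric] by (rule mult_left_mono[OF Hb]) (use u0 in simp)
      also have "\<dots> = u^ra * fact n * M * (u / s)^n"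
        by (simp add: power_add power_divide field_simps)
      also have "\<dots> \<le> L^ra * fact n * M * q^n"
      proof -
        have us: "u / s \<le> q"
          unfolding q_def s_def using u0 uL \<epsilon> by (simp add: field_simps mult_left_mono)
        have "(u / s)^n \<le> q^n" by (rule power_mono[OF us]) (use u0 s0 in simp)
        moreover have "u^ra \<le> L^ra" by (rule power_mono[OF uL]) (use u0 in simp)
        ultimately show ?thesis using M u0 s0 L1
          by (intro mult_mono) (auto intro!: mult_nonneg_nonneg)
      qed
      finally show ?thesis .
    qed
    have "(deriv ^^ n) (ratQ A d z r) w
        = (\<Sum>k<ra. t k * (-1)^n * of_nat (pochhammer (ra - k) n) / (w - \<rho>)^(ra - k + n)) + (deriv ^^ n) h w"
      using dsplit[OF wS0] higher_deriv_main[OF w(2), of n t ra] unfolding fm_def[abs_def] by simp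
    then show ?thesis
      using est_core[OF _ ra1 _ L1 Eh, of t] w(2) uL unfolding u_def by auto
  qed
  define S where "S = (\<Sum>k\<in>{1..<ra}. norm (t k))"
  have lim: "(\<lambda>n. S * L^ra * real ra / (real n + 1) + L^ra * M * q^n) \<longlonglongrightarrow> 0"
  proof -
    have "(\<lambda>n. S * L^ra * real ra * inverse (real (Suc n))) \<longlonglongrightarrow> S * L^ra * real ra * 0"
      by (intro tendsto_mult tendsto_const LIMSEQ_inverse_real_of_nat)
    moreover have "(\<lambda>n. L^ra * M * q^n) \<longlonglongrightarrow> L^ra * M * 0"
      by (intro tendsto_mult tendsto_const LIMSEQ_realpow_zero q01)
    ultimately have "(\<lambda>n. S * L^ra * real ra * inverse (real (Suc n)) + L^ra * M * q^n) \<longlonglongrightarrow> 0 + 0"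
      by (intro tendsto_add) simp_all
    then show ?thesis by (simp add: divide_inverse add.commute)
  qed
  have "eventually (\<lambda>n. S * L^ra * real ra / (real n + 1) + L^ra * M * q^n < norm (t 0)) sequentially"
    using order_tendstoD(2)[OF lim] t0 by simp
  then obtain N where N: "\<forall>n\<ge>N. S * L^ra * real ra / (real n + 1) + L^ra * M * q^n < norm (t 0)"
    unfolding eventually_sequentially by blast
  show ?thesis
  proof (intro exI[of _ N] allI impI ballI)
    fix n w assume n: "n \<ge> N" and w: "w \<in> D"
    show "poly (Nr A d z r n) w \<noteq> 0"
    proof (cases "w = \<rho>")
      case True
      then show ?thesis using Nr_za_nz[OF a inj] Anz r1 a unfolding \<rho>_def by auto
    next
      case False
      have P: "real (pochhammer ra n) > 0"
        using fact_le_poch[OF ra1, of n] by (metis fact_gt_zero of_nat_0_less_iff order_less_le_trans)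
      have pos: "norm (t 0) * real (pochhammer ra n) - S * L^ra * real (pochhammer (ra - 1) n)
          - L^ra * fact n * M * q^n > 0"
      proof (rule final_ineq[OF P])
        show "real (pochhammer (ra - 1) n) * (real n + 1) \<le> real ra * real (pochhammer ra n)"
          using poch_pred[OF ra1, of n] by (metis of_nat_1 of_nat_add of_nat_le_iff of_nat_mult)
        show "fact n \<le> real (pochhammer ra n)"
          using fact_le_poch[OF ra1, of n] by (metis of_nat_fact of_nat_le_iff)
        show "S \<ge> 0" by (simp add: S_def sum_nonneg)
        show "L^ra \<ge> 0" using L1 by simp
        show "M \<ge> 0" using M by simp
        show "q^n \<ge> 0" using q01 by simp
        show "S * L^ra * real ra / (real n + 1) + L^ra * M * q^n < norm (t 0)" using N n by blast
      qed
      have "norm ((w - \<rho>)^(ra+n) * (deriv ^^ n) (ratQ A d z r) w) > 0"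
        using key[OF w False, of n] pos unfolding S_def by linarith
      then have dnz: "(deriv ^^ n) (ratQ A d z r) w \<noteq> 0" by auto
      have wS0: "w \<in> S0 d z"
      proof -
      have "\<forall>j\<in>J. w \<noteq> z j"
      proof
        fix j assume "j \<in> J"
        then have "cmod (w - \<rho>) + 2 * \<epsilon> \<le> cmod (w - z j)" using gapw[OF w] by blast
        then have "cmod (w - z j) > 0" using \<epsilon> norm_ge_zero[of "w - \<rho>"] by linarith
        then show "w \<noteq> z j" by auto
      qed
        then show ?thesis using False unfolding S0_def J_def \<rho>_def by auto
      qed
      then show ?thesis using deriv_ratQ[OF r1] dnz by auto
    qed
  qed
qed


lemma powr_bound_pow:
  fixes x R1 c :: real
  assumes "0 \<le> x" "x \<le> R1 ^ m" "R1 \<ge> 1" "n \<ge> 1" "real m \<le> c * real n"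
  shows "x powr (1 / real n) \<le> R1 powr c"
proof -
  have "x powr (1/real n) \<le> (R1 ^ m) powr (1 / real n)" by (rule powr_mono2) (use assms in auto)
  also have "(R1 ^ m) powr (1 / real n) = R1 powr (real m / real n)"
    using assms(3) by (simp add: powr_realpow[symmetric] powr_powr)
  also have "\<dots> \<le> R1 powr c" using assms by (intro powr_mono) (auto simp: field_simps)
  finally show ?thesis .
qed

lemma powr_bound_geo:
  fixes x \<beta> \<alpha> :: real
  assumes "0 \<le> x" "x \<le> \<beta> * \<alpha> ^ n" "\<beta> \<ge> 1" "\<alpha> \<ge> 1" "n \<ge> 1"
  shows "x powr (1 / real n) \<le> \<beta> * \<alpha>"
proof -
  have "x powr (1/real n) \<le> (\<beta> * \<alpha>^n) powr (1/real n)" by (rule powr_mono2) (use assms in auto)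
  also have "\<dots> = \<beta> powr (1/real n) * (\<alpha>^n) powr (1/real n)" using assms by (simp add: powr_mult)
  also have "(\<alpha>^n) powr (1/real n) = \<alpha>" using assms by (simp add: powr_realpow[symmetric] powr_powr)
  finally have 1: "x powr (1/real n) \<le> \<beta> powr (1/real n) * \<alpha>" .
  have "\<beta> powr (1/real n) \<le> \<beta> powr 1" using assms by (intro powr_mono) auto
  then have "\<beta> powr (1/real n) * \<alpha> \<le> \<beta> * \<alpha>" using assms by (intro mult_right_mono) auto
  with 1 show ?thesis by linarith
qed

lemma ln_bound_geo:
  fixes x \<beta> \<alpha> :: real
  assumes "1 \<le> x" "x \<le> \<beta> * \<alpha> ^ n" "\<beta> \<ge> 1" "\<alpha> \<ge> 1" "real n \<le> real m" "m \<ge> 1"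
  shows "ln x / real m \<le> ln \<beta> + ln \<alpha>"
proof -
  have "ln x \<le> ln (\<beta> * \<alpha> ^ n)" using assms by (subst ln_le_cancel_iff) auto
  also have "\<dots> = ln \<beta> + real n * ln \<alpha>" using assms by (simp add: ln_mult ln_realpow)
  also have "\<dots> \<le> real m * ln \<beta> + real m * ln \<alpha>"
  proof -
    have "ln \<beta> \<le> real m * ln \<beta>" using assms by (simp add: mult_le_cancel_right1)
    moreover have "real n * ln \<alpha> \<le> real m * ln \<alpha>" using assms by (intro mult_right_mono) auto
    ultimately show ?thesis by linarith
  qed
  finally show ?thesis using assms by (simp add: divide_le_eq algebra_simps)
qed

lemma ln_bound_pow:
  fixes x R1 :: real
  assumes "1 \<le> x" "x \<le> R1 ^ m" "R1 \<ge> 1" "m \<ge> 1"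
  shows "ln x / real m \<le> ln R1"
proof -
  have "ln x \<le> ln (R1 ^ m)" using assms by (subst ln_le_cancel_iff) auto
  also have "\<dots> = real m * ln R1" using assms by (simp add: ln_realpow)
  finally show ?thesis using assms by (simp add: divide_le_eq algebra_simps)
qed

lemma close_K:
  fixes f :: "nat \<Rightarrow> real" and m :: "nat \<Rightarrow> nat"
  assumes "Nb \<ge> 1" "\<forall>n\<ge>Nb. 1 \<le> f n" "\<forall>n\<ge>Nb. real n \<le> real (m n)"
    and "\<forall>n\<ge>Nb. f n powr (1/real n) \<le> B1" and "\<forall>n\<ge>Nb. ln (f n) / real (m n) \<le> C"
  shows "(\<exists>B. \<forall>n. f n powr (1 / real n) \<le> B) \<and> (\<exists>C N. \<forall>n\<ge>N. 0 \<le> ln (f n) / real (m n) \<and> ln (f n) / real (m n) \<le> C)"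
proof
  define B where "B = max B1 (Max ((\<lambda>n. f n powr (1/real n)) ` {..<Nb}))"
  have "f n powr (1 / real n) \<le> B" for n
  proof (cases "n < Nb")
    case True
    then have "f n powr (1/real n) \<le> Max ((\<lambda>n. f n powr (1/real n)) ` {..<Nb})" by (intro Max_ge) auto
    then show ?thesis unfolding B_def by linarith
  next
    case False then show ?thesis using assms(4) unfolding B_def by (simp add: le_max_iff_disj)
  qed
  then show "\<exists>B. \<forall>n. f n powr (1 / real n) \<le> B" by blast
  have "\<forall>n\<ge>Nb. 0 \<le> ln (f n) / real (m n) \<and> ln (f n) / real (m n) \<le> C"
    using assms(2,5) by auto
  then show "\<exists>C N. \<forall>n\<ge>N. 0 \<le> ln (f n) / real (m n) \<and> ln (f n) / real (m n) \<le> C" by blast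
qed


theorem lemma4p6:
  fixes A :: "complex poly" and d :: nat and z :: "nat \<Rightarrow> complex"
    and r :: "nat \<Rightarrow> nat" and R :: real
  assumes "d \<ge> 2"
    and "inj_on z {..<d}"
    and "\<forall>i<d. r i \<ge> 1"
    and "\<forall>i<d. poly A (z i) \<noteq> 0"
    and "cball 0 1 \<inter> Vor d z = {}"
    and "\<forall>i<d. cmod (z i) \<ge> 1"
    and "R > 0"
  shows "\<forall>K \<in> {cball 0 R, UNIV - cball 0 R}.
           (\<exists>B. \<forall>n. zprod (polR A d z r n) K powr (1 / real n) \<le> B) \<and>
           (\<exists>C N. \<forall>n\<ge>N.
              0 \<le> ln (zprod (polR A d z r n) K) / real (degree (polR A d z r n)) \<and>
              ln (zprod (polR A d z r n) K) / real (degree (polR A d z r n)) \<le> C)"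
proof -
  have d1: "d \<ge> 1" using assms(1) by simp
  note r1 = assms(3)
  define D where "D a = {w \<in> cball 0 1. \<forall>j<d. cmod (w - z a) \<le> cmod (w - z j)}" for a
  have cover: "\<exists>a<d. w \<in> D a" if w: "w \<in> cball 0 1" for w
  proof -
    let ?S = "(\<lambda>k. cmod (w - z k)) ` {..<d}"
    have "0 \<in> {..<d}" using d1 by simp
    then have fin: "finite ?S" "?S \<noteq> {}" by auto
    obtain a where a: "a < d" "Min ?S = cmod (w - z a)" using Min_in[OF fin] by auto
    have "cmod (w - z a) \<le> cmod (w - z j)" if "j < d" for j
      using Min_le[OF fin(1), of "cmod (w - z j)"] a(2) that by auto
    then show ?thesis using a w unfolding D_def by auto
  qed
  have gap: "\<forall>w\<in>D a. \<forall>j<d. j \<noteq> a \<longrightarrow> cmod (w - z a) < cmod (w - z j)" if a: "a < d" for a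
  proof (intro ballI allI impI)
    fix w j assume w: "w \<in> D a" and j: "j < d" "j \<noteq> a"
    have le: "\<forall>k<d. cmod (w - z a) \<le> cmod (w - z k)" and wc: "w \<in> cball 0 1"
      using w unfolding D_def by auto
    have Phi: "Phi d z w = cmod (w - z a)"
      unfolding Phi_def by (rule Min_eqI) (use le a in auto)
    show "cmod (w - z a) < cmod (w - z j)"
    proof (rule ccontr)
      assume "\<not> ?thesis"
      then have eq: "cmod (w - z a) = cmod (w - z j)" using le j by force
      have "w \<in> Vor d z"
      proof (cases "a < j")
        case True
        then have "w \<in> (if a < j then Vedge d z a j else {})" unfolding Vedge_def using Phi eq by simp
        then show ?thesis unfolding Vor_def using a j(1) by blast
      next
        case False
        then have ja: "j < a" using j(2) by simp
        then have "w \<in> (if j < a then Vedge d z j a else {})" unfolding Vedge_def using Phi eq by simp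
        then show ?thesis unfolding Vor_def using a j(1) by blast
      qed
      then show False using assms(5) wc by blast
    qed
  qed
  have compD: "compact (D a)" for a
  proof -
    have "D a = cball 0 1 \<inter> (\<Inter>j\<in>{..<d}. {w. cmod (w - z a) \<le> cmod (w - z j)})"
      unfolding D_def by auto
    moreover have "closed (\<Inter>j\<in>{..<d}. {w. cmod (w - z a) \<le> cmod (w - z j)})"
      by (intro closed_INT ballI closed_Collect_le continuous_intros)
    ultimately show ?thesis by (simp add: compact_Int_closed)
  qed
  have "\<forall>a\<in>{..<d}. \<exists>N. \<forall>n\<ge>N. \<forall>w\<in>D a. poly (Nr A d z r n) w \<noteq> 0"
  proof
    fix a assume a: "a \<in> {..<d}"
    have sub: "D a \<subseteq> cball 0 1" unfolding D_def by auto
    show "\<exists>N. \<forall>n\<ge>N. \<forall>w\<in>D a. poly (Nr A d z r n) w \<noteq> 0"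
      using zero_free_cell[OF assms(2) r1 assms(4) _ compD sub gap] a by auto
  qed
  from bchoice[OF this] obtain Nf where Nf: "\<forall>a\<in>{..<d}. \<forall>n\<ge>Nf a. \<forall>w\<in>D a. poly (Nr A d z r n) w \<noteq> 0"
    by blast
  define N0 where "N0 = (\<Sum>a<d. Nf a)"
  have nozero: "poly (Nr A d z r n) w \<noteq> 0" if n: "n \<ge> N0" and w: "w \<in> cball 0 1" for n w
  proof -
    obtain a where a: "a < d" "w \<in> D a" using cover[OF w] by blast
    have "Nf a \<le> N0" unfolding N0_def using a(1) by (intro member_le_sum) auto
    then show ?thesis using Nf a n by auto
  qed
  define P where "P = polP d z r"
  define A' where "A' = A mod P"
  have S0_0: "0 \<in> S0 d z"
  proof -
    have "z i \<noteq> 0" if "i < d" for i using assms(6) that by force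
    then show ?thesis unfolding S0_def by auto
  qed
  have P0nz: "poly P 0 \<noteq> 0" unfolding P_def using polP_nz_iff[OF r1] S0_0 by blast
  then have Pnz: "P \<noteq> 0" by auto
  have A'z: "poly A' (z i) = poly A (z i)" if "i < d" for i
  proof -
    have "z i \<notin> S0 d z" using that unfolding S0_def by auto
    then have "poly P (z i) = 0" unfolding P_def using polP_nz_iff[OF r1] by blast
    moreover have "A = (A div P) * P + A'" unfolding A'_def by simp
    ultimately show ?thesis by (metis add_0 mult_zero_right poly_add poly_mult)
  qed
  have A'nz: "A' \<noteq> 0" using A'z[of 0] assms(4) d1 by auto
  have degA': "degree A' < degree (polP d z r)"
    using degree_mod_less'[OF Pnz A'nz[unfolded A'_def]] unfolding A'_def P_def by simp
  define n1 where "n1 = Suc (degree (A div P))"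
  have NrA': "Nr A d z r n = Nr A' d z r n" if "n \<ge> n1" for n
    using Nr_mod[OF r1, where n=n and A=A] that unfolding n1_def A'_def P_def by auto
  note DL = Nr_deg_lead[OF r1 d1 A'nz degA']
  have P_half: "poly P v \<noteq> 0" if "v \<in> cball 0 (1/2)" for v
  proof -
    have "v \<in> S0 d z"
    proof -
      have "v \<noteq> z i" if "i < d" for i
      proof
        assume "v = z i"
        then have "cmod v \<ge> 1" using assms(6) that by auto
        moreover have "cmod v \<le> 1/2" using \<open>v \<in> cball 0 (1/2)\<close> by auto
        ultimately show False by linarith
      qed
      then show ?thesis unfolding S0_def by auto
    qed
    then show ?thesis unfolding P_def using polP_nz_iff[OF r1] by blast
  qed
  have cont_Q: "continuous_on (cball 0 (1/2)) (ratQ A' d z r)"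
    unfolding ratQ_def P_def[symmetric] by (intro continuous_intros) (use P_half in blast)
  obtain M' where M': "M' > 0" "\<forall>v\<in>cball 0 (1/2). cmod (ratQ A' d z r v) \<le> M'"
  proof -
    have "bounded (ratQ A' d z r ` cball 0 (1/2))"
      by (rule compact_imp_bounded[OF compact_continuous_image[OF cont_Q compact_cball]])
    then show ?thesis using that unfolding bounded_pos by auto
  qed
  have cauchy0: "norm ((deriv ^^ n) (ratQ A' d z r) 0) \<le> fact n * M' / (1/2)^n" for n
  proof (rule Cauchy_inequality)
    show "ratQ A' d z r holomorphic_on ball 0 (1/2)"
      unfolding ratQ_def P_def[symmetric] by (intro holomorphic_intros) (use P_half in auto)
    show "continuous_on (cball 0 (1/2)) (ratQ A' d z r)" by (rule cont_Q)
    show "cmod (ratQ A' d z r x) \<le> M'" if "cmod (0 - x) = 1/2" for x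
      using M'(2) that by auto
  qed simp
  define Nb where "Nb = max (max N0 n1) 1"
  define R1 where "R1 = max 1 R"
  define \<beta> where "\<beta> = M' * cmod (poly P 0) / cmod (lead_coeff A')"
  define \<alpha> where "\<alpha> = 2 * cmod (poly (polP0 d z) 0)"
  define \<beta>1 where "\<beta>1 = max 1 \<beta>"
  define \<alpha>1 where "\<alpha>1 = max 1 \<alpha>"
  have facts: "zprod (polR A d z r n) K = zprod (Nr A' d z r n) K"
      "degree (polR A d z r n) = degree A' + n * (d - 1)"
      "Nr A' d z r n \<noteq> 0"
      "\<forall>w. poly (Nr A' d z r n) w = 0 \<longrightarrow> cmod w > 1"
    if n: "n \<ge> Nb" for n K
  proof -
    have nn1: "n \<ge> n1" and nN0: "n \<ge> N0" using n unfolding Nb_def by auto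
    have num: "numQ A d z r n = Nr A' d z r n" using numQ_eq[OF r1] NrA'[OF nn1] by simp
    show roots: "\<forall>w. poly (Nr A' d z r n) w = 0 \<longrightarrow> cmod w > 1"
      using nozero[OF nN0] NrA'[OF nn1] by (metis mem_cball_0 not_le)
    show nz: "Nr A' d z r n \<noteq> 0" using roots by (metis norm_zero not_one_less_zero poly_0)
    have lnz: "inverse (lead_coeff (Nr A' d z r n)) \<noteq> 0" using nz by simp
    show "zprod (polR A d z r n) K = zprod (Nr A' d z r n) K"
      unfolding polR_def num by (rule zprod_smult[OF lnz])
    show "degree (polR A d z r n) = degree A' + n * (d - 1)"
      unfolding polR_def num using lnz DL by simp
  qed
  have mge: "real n \<le> real (degree (polR A d z r n))" "degree (polR A d z r n) \<ge> 1" if n: "n \<ge> Nb" for n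
  proof -
    have "1 \<le> d - 1" using assms(1) by linarith
    then have "n * 1 \<le> n * (d - 1)" by (rule mult_le_mono2)
    then have "n \<le> n * (d - 1)" by simp
    then have nd: "n \<le> degree (polR A d z r n)" using facts(2)[OF n] by linarith
    then show "real n \<le> real (degree (polR A d z r n))" by (simp only: of_nat_le_iff)
    show "degree (polR A d z r n) \<ge> 1" using nd n unfolding Nb_def by simp
  qed
  have ge1: "zprod (polR A d z r n) K \<ge> 1" if n: "n \<ge> Nb" for n K
    unfolding facts(1)[OF n] using facts(4)[OF n] by (intro zprod_ge1) auto
  have ub1: "zprod (polR A d z r n) (cball 0 R) \<le> R1 ^ degree (polR A d z r n)" if n: "n \<ge> Nb" for n
  proof -
    have "degree (polR A d z r n) = degree (Nr A' d z r n)" using facts(2)[OF n] DL by simp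
    moreover have "zprod (Nr A' d z r n) (cball 0 R) \<le> R1 ^ degree (Nr A' d z r n)"
      by (rule zprod_le_pow[OF facts(3)[OF n]]) (auto simp: R1_def)
    ultimately show ?thesis using facts(1)[OF n] by simp
  qed
  have ub2: "zprod (polR A d z r n) (UNIV - cball 0 R) \<le> \<beta>1 * \<alpha>1 ^ n" if n: "n \<ge> Nb" for n
  proof -
    let ?N = "Nr A' d z r n"
    have nz: "?N \<noteq> 0" by (rule facts(3)[OF n])
    have all: "zprod ?N (cball 0 R) * zprod ?N (UNIV - cball 0 R) = cmod (poly ?N 0) / cmod (lead_coeff ?N)"
      using zprod_split[OF nz] vieta[OF nz] by simp
    have g1: "zprod ?N (cball 0 R) \<ge> 1" using ge1[OF n] facts(1)[OF n] by simp
    have z2: "zprod ?N (UNIV - cball 0 R) \<ge> 0" by (rule zprod_nonneg)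
    have le_all: "zprod ?N (UNIV - cball 0 R) \<le> cmod (poly ?N 0) / cmod (lead_coeff ?N)"
      using all g1 z2 by (metis mult_cancel_right2 mult_right_mono mult.commute)
    have Mnz: "poly (P * polP0 d z ^ n) 0 \<noteq> 0"
      using P0nz polP0_nz[OF S0_0] by (simp add: poly_mult)
    have "(deriv ^^ n) (ratQ A' d z r) 0 = poly ?N 0 / poly (P * polP0 d z ^ n) 0"
      using deriv_ratQ[OF r1] S0_0 unfolding P_def by blast
    then have N0eq: "poly ?N 0 = (deriv ^^ n) (ratQ A' d z r) 0 * (poly P 0 * poly (polP0 d z) 0 ^ n)"
      using Mnz by (simp add: field_simps poly_mult)
    have numb: "cmod (poly ?N 0) \<le> fact n * M' * 2^n * cmod (poly P 0) * cmod (poly (polP0 d z) 0) ^ n"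
    proof -
      have "cmod (poly ?N 0) = norm ((deriv ^^ n) (ratQ A' d z r) 0) * (cmod (poly P 0) * cmod (poly (polP0 d z) 0) ^ n)"
        unfolding N0eq by (simp add: norm_mult norm_power)
      also have "\<dots> \<le> (fact n * M' / (1/2)^n) * (cmod (poly P 0) * cmod (poly (polP0 d z) 0) ^ n)"
        by (rule mult_right_mono[OF cauchy0]) simp
      also have "\<dots> = fact n * M' * 2^n * cmod (poly P 0) * cmod (poly (polP0 d z) 0) ^ n"
        by (simp add: power_one_over field_simps)
      finally show ?thesis .
    qed
    have leadb: "cmod (lead_coeff A') * fact n \<le> cmod (lead_coeff ?N)" using DL by blast
    have lA: "cmod (lead_coeff A') > 0" using A'nz by simp
    have "cmod (poly ?N 0) / cmod (lead_coeff ?N)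
        \<le> (fact n * M' * 2^n * cmod (poly P 0) * cmod (poly (polP0 d z) 0) ^ n) / (cmod (lead_coeff A') * fact n)"
      by (rule frac_le[OF _ numb _ leadb]) (use lA M' in auto)
    also have "\<dots> = \<beta> * \<alpha> ^ n"
      unfolding \<beta>_def \<alpha>_def using lA by (simp add: field_simps power_mult_distrib)
    also have "\<dots> \<le> \<beta>1 * \<alpha>1 ^ n"
    proof -
      have "\<beta> \<ge> 0" "\<alpha> \<ge> 0" unfolding \<beta>_def \<alpha>_def using M' by auto
      then show ?thesis unfolding \<beta>1_def \<alpha>1_def
        by (intro mult_mono power_mono) auto
    qed
    finally show ?thesis using le_all facts(1)[OF n] by simp
  qed
  have Nb1: "Nb \<ge> 1" unfolding Nb_def by simp
  show ?thesis
  proof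
    fix K :: "complex set" assume K: "K \<in> {cball 0 R, UNIV - cball 0 R}"
    show "(\<exists>B. \<forall>n. zprod (polR A d z r n) K powr (1 / real n) \<le> B) \<and>
           (\<exists>C N. \<forall>n\<ge>N.
              0 \<le> ln (zprod (polR A d z r n) K) / real (degree (polR A d z r n)) \<and>
              ln (zprod (polR A d z r n) K) / real (degree (polR A d z r n)) \<le> C)"
    proof (cases "K = cball 0 R")
      case True
      show ?thesis unfolding True
      proof (rule close_K[OF Nb1])
        show "\<forall>n\<ge>Nb. 1 \<le> zprod (polR A d z r n) (cball 0 R)" using ge1 by blast
        show "\<forall>n\<ge>Nb. real n \<le> real (degree (polR A d z r n))" using mge by blast
        show "\<forall>n\<ge>Nb. zprod (polR A d z r n) (cball 0 R) powr (1 / real n) \<le> R1 powr (real (degree A') + real d)"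
        proof (intro allI impI)
          fix n assume n: "n \<ge> Nb"
          show "zprod (polR A d z r n) (cball 0 R) powr (1 / real n) \<le> R1 powr (real (degree A') + real d)"
          proof (rule powr_bound_pow[OF _ ub1[OF n]])
            show "0 \<le> zprod (polR A d z r n) (cball 0 R)" by (rule zprod_nonneg)
            show "1 \<le> R1" by (simp add: R1_def)
            show "1 \<le> n" using n Nb1 by simp
            have "real (degree A' + n * (d - 1)) \<le> (real (degree A') + real d) * real n"
            proof -
              have "real (degree A') \<le> real (degree A') * real n" using n Nb1 by (simp add: mult_le_cancel_left1)
              moreover have "real (n * (d - 1)) \<le> real d * real n"
              proof -
                have "n * (d - 1) \<le> n * d" by (rule mult_le_mono2) simp
                then have "real (n * (d - 1)) \<le> real (n * d)" by (simp only: of_nat_le_iff)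
                then show ?thesis by (simp add: mult.commute)
              qed
              ultimately show ?thesis by (simp add: algebra_simps)
            qed
            then show "real (degree (polR A d z r n)) \<le> (real (degree A') + real d) * real n"
              using facts(2)[OF n] by simp
          qed
        qed
        show "\<forall>n\<ge>Nb. ln (zprod (polR A d z r n) (cball 0 R)) / real (degree (polR A d z r n)) \<le> ln R1"
          using ln_bound_pow ge1 ub1 mge(2) by (simp add: R1_def)
      qed
    next
      case False
      then have KK: "K = UNIV - cball 0 R" using K by blast
      have b1: "\<beta>1 \<ge> 1" "\<alpha>1 \<ge> 1" unfolding \<beta>1_def \<alpha>1_def by auto
      show ?thesis unfolding KK
      proof (rule close_K[OF Nb1])
        show "\<forall>n\<ge>Nb. 1 \<le> zprod (polR A d z r n) (UNIV - cball 0 R)" using ge1 by blast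
        show "\<forall>n\<ge>Nb. real n \<le> real (degree (polR A d z r n))" using mge by blast
        show "\<forall>n\<ge>Nb. zprod (polR A d z r n) (UNIV - cball 0 R) powr (1 / real n) \<le> \<beta>1 * \<alpha>1"
          using powr_bound_geo[OF zprod_nonneg ub2 b1] Nb1 by auto
        show "\<forall>n\<ge>Nb. ln (zprod (polR A d z r n) (UNIV - cball 0 R)) / real (degree (polR A d z r n)) \<le> ln \<beta>1 + ln \<alpha>1"
          using ln_bound_geo[OF ge1 ub2 b1 mge(1) mge(2)] by blast
      qed
    qed
  qed
qed


end
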